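(* Let $A$ be a Noetherian ring, $\mathcal{R}$ a standard graded ring with $\mathcal{R}_0=A$, and let $X\in\operatorname{^*Mod}_f(\mathcal{R})$ be quasi-finite. Then $\operatorname{Ass}_A X_n\subseteq\operatorname{Ass}_A X_{n+1}$ for all $n\gg0$.
   Context: A standard graded ring $\mathcal{R}=\bigoplus_{n\ge0}\mathcal{R}_n$ with $\mathcal{R}_0=A$ is a Noetherian $\mathbb{N}$-graded commutative ring generated as an $A$-algebra by finitely many elements of $\mathcal{R}_1$; $\mathcal{R}_+=\bigoplus_{n\ge1}\mathcal{R}_n$. $\operatorname{^*Mod}_f(\mathcal{R})$ is the full subcategory of graded $\mathcal{R}$-modules $X=\bigoplus_{n\in\mathbb{Z}}X_n$ with every $X_n$ a finitely generated $A$-module and $X_n=0$ for $n\ll0$. $H^0_{\mathcal{R}_+}(X)=\{x\in X:\mathcal{R}_+^k x=0\text{ for some }k\}$. A module $X\in\operatorname{^*Mod}_f(\mathcal{R})$ is quasi-finite if $H^0_{\mathcal{R}_+}(X)_n=0$ for all $n\gg0$. *)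

theory Defs
  imports Main "HOL.Modules"
begin

text \<open>The ambient graded ring is a type 'r (its whole universe), graded by
  Rg :: nat => 'r set. A graded module is a type 'm with scalar action sc
  (a HOL module over 'r), graded by Xg :: int => 'm set.\<close>

definition add_subgroup :: "'a::ab_group_add set \<Rightarrow> bool" where
  "add_subgroup S \<longleftrightarrow> 0 \<in> S \<and> (\<forall>x\<in>S. \<forall>y\<in>S. x + y \<in> S) \<and> (\<forall>x\<in>S. - x \<in> S)"

definition direct_sum_decomp :: "('i \<Rightarrow> 'a::ab_group_add set) \<Rightarrow> bool" where
  "direct_sum_decomp G \<longleftrightarrow>
     (\<forall>x. \<exists>!f. (\<forall>i. f i \<in> G i) \<and> finite {i. f i \<noteq> 0} \<and> x = sum f {i. f i \<noteq> 0})"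

definition graded_ring :: "(nat \<Rightarrow> 'r::comm_ring_1 set) \<Rightarrow> bool" where
  "graded_ring Rg \<longleftrightarrow> (\<forall>n. add_subgroup (Rg n))
     \<and> (\<forall>m n. \<forall>a\<in>Rg m. \<forall>b\<in>Rg n. a * b \<in> Rg (m + n))
     \<and> 1 \<in> Rg 0
     \<and> direct_sum_decomp Rg"

definition ideal_in :: "'r::comm_ring_1 set \<Rightarrow> 'r set \<Rightarrow> bool" where
  "ideal_in S I \<longleftrightarrow> I \<subseteq> S \<and> add_subgroup I \<and> (\<forall>s\<in>S. \<forall>x\<in>I. s * x \<in> I)"

definition subring :: "'r::comm_ring_1 set \<Rightarrow> bool" where
  "subring S \<longleftrightarrow> add_subgroup S \<and> 1 \<in> S \<and> (\<forall>x\<in>S. \<forall>y\<in>S. x * y \<in> S)"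

definition lin_span :: "('r \<Rightarrow> 'm::ab_group_add \<Rightarrow> 'm) \<Rightarrow> 'r set \<Rightarrow> 'm set \<Rightarrow> 'm set" where
  "lin_span sc S F = {\<Sum>x\<in>E. sc (c x) x | E c. finite E \<and> E \<subseteq> F \<and> (\<forall>x\<in>E. c x \<in> S)}"

definition noetherian_subring :: "'r::comm_ring_1 set \<Rightarrow> bool" where
  "noetherian_subring S \<longleftrightarrow> subring S \<and>
     (\<forall>I. ideal_in S I \<longrightarrow> (\<exists>F. finite F \<and> F \<subseteq> I \<and> I = lin_span (*) S F))"

definition prime_ideal_in :: "'r::comm_ring_1 set \<Rightarrow> 'r set \<Rightarrow> bool" where
  "prime_ideal_in S P \<longleftrightarrow> ideal_in S P \<and> P \<noteq> S \<and>
     (\<forall>a\<in>S. \<forall>b\<in>S. a * b \<in> P \<longrightarrow> a \<in> P \<or> b \<in> P)"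

definition subalg_gen :: "'r::comm_ring_1 set \<Rightarrow> 'r set \<Rightarrow> 'r set" where
  "subalg_gen A F = \<Inter>{S. subring S \<and> A \<subseteq> S \<and> F \<subseteq> S}"

definition standard_graded_ring :: "(nat \<Rightarrow> 'r::comm_ring_1 set) \<Rightarrow> bool" where
  "standard_graded_ring Rg \<longleftrightarrow> graded_ring Rg \<and> noetherian_subring (UNIV :: 'r set) \<and>
     (\<exists>F. finite F \<and> F \<subseteq> Rg 1 \<and> subalg_gen (Rg 0) F = UNIV)"

definition Rplus :: "(nat \<Rightarrow> 'r::comm_ring_1 set) \<Rightarrow> 'r set" where
  "Rplus Rg = {r. \<exists>f. (\<forall>n. f n \<in> Rg n) \<and> finite {n. f n \<noteq> 0} \<and> f 0 = 0
                     \<and> r = sum f {n. f n \<noteq> 0}}"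

definition ideal_pow :: "'r::comm_ring_1 set \<Rightarrow> nat \<Rightarrow> 'r set" where
  "ideal_pow I k = lin_span (*) UNIV {prod_list rs | rs. length rs = k \<and> set rs \<subseteq> I}"

definition graded_module_f ::
  "(nat \<Rightarrow> 'r::comm_ring_1 set) \<Rightarrow> ('r \<Rightarrow> 'm::ab_group_add \<Rightarrow> 'm) \<Rightarrow> (int \<Rightarrow> 'm set) \<Rightarrow> bool" where
  "graded_module_f Rg sc Xg \<longleftrightarrow> module sc
     \<and> (\<forall>n. add_subgroup (Xg n))
     \<and> (\<forall>m n. \<forall>a\<in>Rg m. \<forall>x\<in>Xg n. sc a x \<in> Xg (int m + n))
     \<and> direct_sum_decomp Xg
     \<and> (\<forall>n. \<exists>F. finite F \<and> F \<subseteq> Xg n \<and> Xg n = lin_span sc (Rg 0) F)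
     \<and> (\<exists>N. \<forall>n<N. Xg n = {0})"

definition H0_Rplus :: "(nat \<Rightarrow> 'r::comm_ring_1 set) \<Rightarrow> ('r \<Rightarrow> 'm::ab_group_add \<Rightarrow> 'm) \<Rightarrow> 'm set" where
  "H0_Rplus Rg sc = {x. \<exists>k. \<forall>r\<in>ideal_pow (Rplus Rg) k. sc r x = 0}"

definition quasi_finite ::
  "(nat \<Rightarrow> 'r::comm_ring_1 set) \<Rightarrow> ('r \<Rightarrow> 'm::ab_group_add \<Rightarrow> 'm) \<Rightarrow> (int \<Rightarrow> 'm set) \<Rightarrow> bool" where
  "quasi_finite Rg sc Xg \<longleftrightarrow> (\<exists>N. \<forall>n\<ge>N. H0_Rplus Rg sc \<inter> Xg n = {0})"

definition Ass_in :: "'r::comm_ring_1 set \<Rightarrow> ('r \<Rightarrow> 'm::ab_group_add \<Rightarrow> 'm) \<Rightarrow> 'm set \<Rightarrow> 'r set set" where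
  "Ass_in A sc M = {P. prime_ideal_in A P \<and> (\<exists>x\<in>M. P = {a\<in>A. sc a x = 0})}"

end

theory Submission imports Defs begin

definition dcomp :: "('i \<Rightarrow> 'a::ab_group_add set) \<Rightarrow> 'a \<Rightarrow> 'i \<Rightarrow> 'a" where
  "dcomp G x = (THE f. (\<forall>i. f i \<in> G i) \<and> finite {i. f i \<noteq> 0} \<and> x = sum f {i. f i \<noteq> 0})"

lemma dcomp_eq:
  assumes D: "direct_sum_decomp G" and g: "\<forall>i. g i \<in> G i" and S: "finite S" "{i. g i \<noteq> 0} \<subseteq> S"
    and x: "x = sum g S"
  shows "dcomp G x = g"
proof -
  have fin: "finite {i. g i \<noteq> 0}" using S finite_subset by blast
  have "sum g S = sum g {i. g i \<noteq> 0}"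
    by (rule sum.mono_neutral_right[OF S(1) S(2)]) auto
  hence x': "x = sum g {i. g i \<noteq> 0}" using x by simp
  from D have ex: "\<exists>!f. (\<forall>i. f i \<in> G i) \<and> finite {i. f i \<noteq> 0} \<and> x = sum f {i. f i \<noteq> 0}"
    unfolding direct_sum_decomp_def by blast
  show ?thesis unfolding dcomp_def
    by (rule the1_equality[OF ex]) (use g fin x' in blast)
qed

lemma dcomp_props:
  assumes D: "direct_sum_decomp G"
  shows "(\<forall>i. dcomp G x i \<in> G i) \<and> finite {i. dcomp G x i \<noteq> 0} \<and> x = sum (dcomp G x) {i. dcomp G x i \<noteq> 0}"
proof -
  from D have ex: "\<exists>!f. (\<forall>i. f i \<in> G i) \<and> finite {i. f i \<noteq> 0} \<and> x = sum f {i. f i \<noteq> 0}"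
    unfolding direct_sum_decomp_def by blast
  show ?thesis unfolding dcomp_def by (rule theI'[OF ex])
qed

lemma dcomp_add:
  assumes D: "direct_sum_decomp G" and A: "\<forall>i. add_subgroup (G i)"
  shows "dcomp G (x + y) = (\<lambda>i. dcomp G x i + dcomp G y i)"
proof (rule dcomp_eq[OF D])
  let ?a = "dcomp G x" and ?b = "dcomp G y"
  let ?S = "{i. ?a i \<noteq> 0} \<union> {i. ?b i \<noteq> 0}"
  note px = dcomp_props[OF D, of x] and py = dcomp_props[OF D, of y]
  show "\<forall>i. ?a i + ?b i \<in> G i" using px py A unfolding add_subgroup_def by blast
  show "finite ?S" using px py by blast
  show "{i. ?a i + ?b i \<noteq> 0} \<subseteq> ?S" by auto
  have "sum ?a ?S = sum ?a {i. ?a i \<noteq> 0}"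
    by (rule sum.mono_neutral_right) (use px py in auto)
  moreover have "sum ?b ?S = sum ?b {i. ?b i \<noteq> 0}"
    by (rule sum.mono_neutral_right) (use px py in auto)
  ultimately show "x + y = (\<Sum>i\<in>?S. ?a i + ?b i)"
    using px py by (simp add: sum.distrib)
qed

lemma dcomp_zero:
  assumes D: "direct_sum_decomp G" and A: "\<forall>i. add_subgroup (G i)"
  shows "dcomp G 0 = (\<lambda>i. 0)"
  by (rule dcomp_eq[OF D, of _ "{}"]) (use A in \<open>auto simp: add_subgroup_def\<close>)

lemma dcomp_sum0:
  assumes D: "direct_sum_decomp G" and A: "\<forall>i. add_subgroup (G i)" and E: "finite E"
  shows "(\<forall>j\<in>E. dcomp G (u j) k = 0) \<Longrightarrow> dcomp G (sum u E) k = 0"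
  using E
proof (induction E rule: finite_induct)
  case empty
  then show ?case using dcomp_zero[OF D A] by simp
next
  case (insert j E)
  then show ?case using dcomp_add[OF D A] by simp
qed

lemma graded_ring_I:
  assumes G: "graded_ring Rg" and F: "finite F" "F \<subseteq> Rg 1" and gen: "subalg_gen (Rg 0) F = UNIV"
    and h: "h \<in> Rg m" and m: "m \<ge> 1"
  shows "\<exists>s. h = (\<Sum>f\<in>F. s f * f)"
proof -
  have D: "direct_sum_decomp Rg" and A: "\<forall>n. add_subgroup (Rg n)"
    and mul: "\<forall>m n. \<forall>a\<in>Rg m. \<forall>b\<in>Rg n. a * b \<in> Rg (m + n)" and one: "1 \<in> Rg 0"
    using G unfolding graded_ring_def by auto
  define I where "I = {r. \<exists>s. r = (\<Sum>f\<in>F. s f * f)}"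
  define S where "S = {a + i | a i. a \<in> Rg 0 \<and> i \<in> I}"
  have I0: "0 \<in> I" unfolding I_def by (simp, rule exI[of _ "\<lambda>_. 0"], simp)
  have Iin: "(\<Sum>f\<in>F. s f * f) \<in> I" for s unfolding I_def by blast
  have Iadd: "x + y \<in> I" if xyI: "x \<in> I" "y \<in> I" for x y
  proof -
    obtain s t where "x = (\<Sum>f\<in>F. s f * f)" "y = (\<Sum>f\<in>F. t f * f)" using xyI unfolding I_def by blast
    hence "x + y = (\<Sum>f\<in>F. (s f + t f) * f)" by (simp add: sum.distrib distrib_right)
    thus ?thesis using Iin by metis
  qed
  have Imul: "c * x \<in> I" if xI: "x \<in> I" for c x
  proof -
    obtain s where "x = (\<Sum>f\<in>F. s f * f)" using xI unfolding I_def by blast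
    hence "c * x = (\<Sum>f\<in>F. (c * s f) * f)" by (simp add: sum_distrib_left mult.assoc)
    thus ?thesis using Iin by metis
  qed
  have A0: "0 \<in> Rg 0" "\<And>x y. x \<in> Rg 0 \<Longrightarrow> y \<in> Rg 0 \<Longrightarrow> x + y \<in> Rg 0"
    "\<And>x. x \<in> Rg 0 \<Longrightarrow> - x \<in> Rg 0" using A unfolding add_subgroup_def by auto
  have Z: "\<And>i. 0 \<in> Rg i" using A unfolding add_subgroup_def by auto
  have mul0: "\<And>x y. x \<in> Rg 0 \<Longrightarrow> y \<in> Rg 0 \<Longrightarrow> x * y \<in> Rg 0" using mul by fastforce
  have Sin: "a + i \<in> S" if "a \<in> Rg 0" "i \<in> I" for a i using that unfolding S_def by blast
  have subS: "subring S" unfolding subring_def add_subgroup_def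
  proof (intro conjI ballI)
    show "0 \<in> S" unfolding S_def using A0 I0 by force
    show "1 \<in> S" unfolding S_def using one I0 by force
  next
    fix x y assume "x \<in> S" "y \<in> S"
    then obtain a i b j where xy: "x = a + i" "y = b + j" "a \<in> Rg 0" "b \<in> Rg 0" "i \<in> I" "j \<in> I"
      unfolding S_def by blast
    have "x + y = (a + b) + (i + j)" using xy by simp
    thus "x + y \<in> S" using Sin xy A0 Iadd by metis
    have "x * y = (a * b) + ((a * j + b * i) + i * j)" using xy by (simp add: algebra_simps)
    moreover have "a * b \<in> Rg 0" using mul0 xy by blast
    moreover have "(a * j + b * i) + i * j \<in> I" using Iadd Imul xy by metis
    ultimately show "x * y \<in> S" using Sin by metis
  next
    fix x assume "x \<in> S"
    then obtain a i where xy: "x = a + i" "a \<in> Rg 0" "i \<in> I" unfolding S_def by blast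
    have "- x = (- a) + ((-1) * i)" using xy by simp
    moreover have "(-1) * i \<in> I" using Imul xy by blast
    ultimately show "- x \<in> S" using Sin xy A0 by metis
  qed
  have FS: "F \<subseteq> S"
  proof
    fix f assume f: "f \<in> F"
    have "(\<Sum>g\<in>F. (if g = f then 1 else 0) * g) = (\<Sum>g\<in>F. if g = f then g else 0)"
      by (intro sum.cong) auto
    also have "\<dots> = f" using f F(1) by simp
    finally have "(\<Sum>g\<in>F. (if g = f then 1 else 0) * g) = f" .
    hence "f \<in> I" using Iin by metis
    hence "0 + f \<in> S" unfolding S_def using A0 by blast
    thus "f \<in> S" by simp
  qed
  have AS: "Rg 0 \<subseteq> S"
  proof
    fix a assume "a \<in> Rg 0" hence "a + 0 \<in> S" unfolding S_def using I0 by blast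
    thus "a \<in> S" by simp
  qed
  have "subalg_gen (Rg 0) F \<subseteq> S" unfolding subalg_gen_def using subS FS AS by blast
  hence "h \<in> S" using gen by blast
  then obtain a i where hai: "h = a + i" "a \<in> Rg 0" "i \<in> I" unfolding S_def by blast
  have dh: "dcomp Rg h = (\<lambda>k. if k = m then h else 0)"
    by (rule dcomp_eq[OF D, of _ "{m}"]) (use h Z in auto)
  have da: "dcomp Rg a = (\<lambda>k. if k = 0 then a else 0)"
    by (rule dcomp_eq[OF D, of _ "{0}"]) (use hai Z in auto)
  have dcf: "dcomp Rg (c * f) 0 = 0" if f: "f \<in> Rg 1" for c f
  proof -
    let ?d = "dcomp Rg c"
    define T where "T = {j. ?d j \<noteq> 0}"
    note pc = dcomp_props[OF D, of c]
    define g where "g k = (if k = 0 then 0 else ?d (k - 1) * f)" for k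
    have "dcomp Rg (c * f) = g"
    proof (rule dcomp_eq[OF D, of _ "Suc ` T"])
      show "\<forall>k. g k \<in> Rg k"
      proof
        fix k show "g k \<in> Rg k"
        proof (cases k)
          case 0 then show ?thesis using A0 g_def by simp
        next
          case (Suc j)
          have "?d j * f \<in> Rg (j + 1)" using mul pc f by blast
          then show ?thesis using Suc g_def by simp
        qed
      qed
      show "finite (Suc ` T)" using pc T_def by simp
      show "{k. g k \<noteq> 0} \<subseteq> Suc ` T"
      proof
        fix k assume "k \<in> {k. g k \<noteq> 0}"
        hence "k \<noteq> 0" "?d (k - 1) \<noteq> 0" by (auto simp: g_def split: if_splits)
        hence "k = Suc (k - 1)" "k - 1 \<in> T" unfolding T_def by auto
        thus "k \<in> Suc ` T" by (metis image_eqI)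
      qed
      have "sum g (Suc ` T) = (\<Sum>j\<in>T. ?d j * f)" by (simp add: sum.reindex g_def)
      also have "\<dots> = c * f" using pc T_def by (simp add: sum_distrib_right[symmetric])
      finally show "c * f = sum g (Suc ` T)" by simp
    qed
    thus ?thesis by (simp add: g_def)
  qed
  obtain s where iS: "i = (\<Sum>f\<in>F. s f * f)" using hai unfolding I_def by blast
  have di: "dcomp Rg i 0 = 0" unfolding iS
    by (rule dcomp_sum0[OF D A F(1)]) (use dcf F(2) in blast)
  have "dcomp Rg h 0 = dcomp Rg a 0 + dcomp Rg i 0" using hai dcomp_add[OF D A] by simp
  hence "a = 0" using dh da di m by simp
  hence "h = (\<Sum>f\<in>F. s f * f)" using hai iS by simp
  thus ?thesis by blast
qed


theorem proposition4p2:
  fixes Rg :: "nat \<Rightarrow> 'r::comm_ring_1 set"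
    and sc :: "'r \<Rightarrow> 'm::ab_group_add \<Rightarrow> 'm"
    and Xg :: "int \<Rightarrow> 'm set"
  assumes "noetherian_subring (Rg 0)"
    and "standard_graded_ring Rg"
    and "graded_module_f Rg sc Xg"
    and "quasi_finite Rg sc Xg"
  shows "\<exists>N. \<forall>n\<ge>N. Ass_in (Rg 0) sc (Xg n) \<subseteq> Ass_in (Rg 0) sc (Xg (n + 1))"
proof -
  have G: "graded_ring Rg" using assms(2) unfolding standard_graded_ring_def by blast
  obtain F where F: "finite F" "F \<subseteq> Rg 1" and gen: "subalg_gen (Rg 0) F = UNIV"
    using assms(2) unfolding standard_graded_ring_def by blast
  have M: "module sc" and mulX: "\<forall>m n. \<forall>a\<in>Rg m. \<forall>x\<in>Xg n. sc a x \<in> Xg (int m + n)"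
    using assms(3) unfolding graded_module_f_def by blast+
  have A: "\<forall>n. add_subgroup (Rg n)" and mul: "\<forall>m n. \<forall>a\<in>Rg m. \<forall>b\<in>Rg n. a * b \<in> Rg (m + n)"
    and one: "1 \<in> Rg 0" using G unfolding graded_ring_def by auto
  have mul0: "\<And>x y. x \<in> Rg 0 \<Longrightarrow> y \<in> Rg 0 \<Longrightarrow> x * y \<in> Rg 0" using mul by fastforce
  obtain N where N: "\<forall>n\<ge>N. H0_Rplus Rg sc \<inter> Xg n = {0}"
    using assms(4) unfolding quasi_finite_def by blast
  have sc_assoc: "sc a (sc b v) = sc (a * b) v" for a b v using module.scale_scale[OF M] by simp
  have sc_comm: "sc a (sc b v) = sc b (sc a v)" for a b v using module.scale_left_commute[OF M] by simp
  have sc0: "sc a 0 = 0" for a using module.scale_zero_right[OF M] by simp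
  show ?thesis
  proof (intro exI allI impI subsetI)
    fix n P assume nN: "N \<le> n" and PA: "P \<in> Ass_in (Rg 0) sc (Xg n)"
    then obtain x where prime: "prime_ideal_in (Rg 0) P" and x: "x \<in> Xg n"
      and Px: "P = {a \<in> Rg 0. sc a x = 0}" unfolding Ass_in_def by blast
    have sub: "P \<subseteq> {a \<in> Rg 0. sc a (sc f x) = 0}" for f
    proof
      fix a assume "a \<in> P"
      hence "a \<in> Rg 0" "sc a x = 0" using Px by auto
      moreover have "sc a (sc f x) = sc f (sc a x)" by (rule sc_comm)
      ultimately show "a \<in> {a \<in> Rg 0. sc a (sc f x) = 0}" using sc0 by simp
    qed
    show "P \<in> Ass_in (Rg 0) sc (Xg (n + 1))"
    proof (cases "\<exists>f\<in>F. {a \<in> Rg 0. sc a (sc f x) = 0} = P")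
      case True
      then obtain f where f: "f \<in> F" and eq: "{a \<in> Rg 0. sc a (sc f x) = 0} = P" by blast
      have "sc f x \<in> Xg (int 1 + n)" using mulX f F(2) x by blast
      hence "sc f x \<in> Xg (n + 1)" by (simp add: add.commute)
      thus ?thesis unfolding Ass_in_def using prime eq by blast
    next
      case False
      have "\<forall>f\<in>F. \<exists>b. b \<in> Rg 0 \<and> b \<notin> P \<and> sc b (sc f x) = 0"
      proof
        fix f assume "f \<in> F"
        hence "{a \<in> Rg 0. sc a (sc f x) = 0} \<noteq> P" using False by blast
        thus "\<exists>b. b \<in> Rg 0 \<and> b \<notin> P \<and> sc b (sc f x) = 0" using sub[of f] by blast
      qed
      then obtain bf where bf: "\<And>f. f \<in> F \<Longrightarrow> bf f \<in> Rg 0 \<and> bf f \<notin> P \<and> sc (bf f) (sc f x) = 0"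
        by metis
      define a where "a = (\<Prod>f\<in>F. bf f)"
      have PsubA: "P \<subseteq> Rg 0" and Pne: "P \<noteq> Rg 0"
        and Pmul: "\<forall>s\<in>Rg 0. \<forall>y\<in>P. s * y \<in> P"
        and Ppr: "\<forall>u\<in>Rg 0. \<forall>v\<in>Rg 0. u * v \<in> P \<longrightarrow> u \<in> P \<or> v \<in> P"
        using prime unfolding prime_ideal_in_def ideal_in_def by auto
      have oneP: "1 \<notin> P"
      proof
        assume "1 \<in> P"
        hence "Rg 0 \<subseteq> P" using Pmul by (metis mult.right_neutral subsetI)
        thus False using PsubA Pne by blast
      qed
      have prodP: "finite E \<Longrightarrow> E \<subseteq> F \<Longrightarrow> (\<Prod>f\<in>E. bf f) \<in> Rg 0 \<and> (\<Prod>f\<in>E. bf f) \<notin> P" for E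
        proof (induction E rule: finite_induct)
          case empty then show ?case using one oneP by simp
        next
          case (insert e E)
          hence IH: "(\<Prod>f\<in>E. bf f) \<in> Rg 0" "(\<Prod>f\<in>E. bf f) \<notin> P" and be: "bf e \<in> Rg 0" "bf e \<notin> P"
            using bf by auto
          have "bf e * (\<Prod>f\<in>E. bf f) \<in> Rg 0" using mul0 IH be by blast
          moreover have "bf e * (\<Prod>f\<in>E. bf f) \<notin> P" using Ppr IH be by blast
          ultimately show ?case using insert by simp
        qed
      have aA: "a \<in> Rg 0" and aP: "a \<notin> P" using prodP[OF F(1)] a_def by auto
      have af: "sc f (sc a x) = 0" if f: "f \<in> F" for f
      proof -
        have "a = (\<Prod>g\<in>F - {f}. bf g) * bf f" unfolding a_def
          using prod.remove[OF F(1) f, of bf] by (simp add: mult.commute)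
        hence "sc a (sc f x) = sc (\<Prod>g\<in>F - {f}. bf g) (sc (bf f) (sc f x))" by (simp add: sc_assoc mult.assoc)
        also have "\<dots> = 0" using bf[OF f] sc0 by simp
        finally show ?thesis using sc_comm by metis
      qed
      have hom: "sc h (sc a x) = 0" if h: "h \<in> Rg m" "m \<ge> 1" for h m
      proof -
        obtain s where hs: "h = (\<Sum>f\<in>F. s f * f)" using graded_ring_I[OF G F gen h] by blast
        have "sc h (sc a x) = (\<Sum>f\<in>F. sc (s f * f) (sc a x))"
          unfolding hs by (rule module.scale_sum_left[OF M])
        also have "\<dots> = (\<Sum>f\<in>F. sc (s f) (sc f (sc a x)))" by (simp add: sc_assoc mult.assoc)
        also have "\<dots> = 0" using af sc0 by simp
        finally show ?thesis .
      qed
      have plus: "sc y (sc a x) = 0" if y: "y \<in> Rplus Rg" for y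
      proof -
        obtain g where g: "\<forall>n. g n \<in> Rg n" "g 0 = 0" "y = sum g {n. g n \<noteq> 0}"
          using y unfolding Rplus_def by blast
        have "sc y (sc a x) = (\<Sum>k\<in>{n. g n \<noteq> 0}. sc (g k) (sc a x))"
          unfolding g(3) by (rule module.scale_sum_left[OF M])
        also have "\<dots> = 0"
        proof (rule sum.neutral, rule ballI)
          fix k assume "k \<in> {n. g n \<noteq> 0}"
          hence "k \<ge> 1" using g(2) by (cases k) auto
          thus "sc (g k) (sc a x) = 0" using hom g(1) by blast
        qed
        finally show ?thesis .
      qed
      have H0: "sc a x \<in> H0_Rplus Rg sc" unfolding H0_Rplus_def
      proof (intro CollectI exI[of _ 1] ballI)
        fix r assume "r \<in> ideal_pow (Rplus Rg) 1"
        then obtain E c where E: "finite E" "E \<subseteq> {prod_list rs | rs. length rs = 1 \<and> set rs \<subseteq> Rplus Rg}"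
          and r: "r = (\<Sum>y\<in>E. c y * y)"
          unfolding ideal_pow_def lin_span_def by blast
        have ER: "E \<subseteq> Rplus Rg"
        proof
          fix y assume "y \<in> E"
          then obtain rs where "y = prod_list rs" "length rs = 1" "set rs \<subseteq> Rplus Rg" using E by blast
          then obtain z where "rs = [z]" "z \<in> Rplus Rg"
            by (metis (no_types, lifting) One_nat_def Suc_length_conv length_0_conv list.set_intros(1) subset_code(1))
          thus "y \<in> Rplus Rg" using \<open>y = prod_list rs\<close> by simp
        qed
        have "sc r (sc a x) = (\<Sum>y\<in>E. sc (c y * y) (sc a x))"
          unfolding r by (rule module.scale_sum_left[OF M])
        also have "\<dots> = (\<Sum>y\<in>E. sc (c y) (sc y (sc a x)))" by (simp add: sc_assoc mult.assoc)
        also have "\<dots> = 0" using plus ER sc0 by (simp add: subset_iff)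
        finally show "sc r (sc a x) = 0" .
      qed
      have "sc a x \<in> Xg (int 0 + n)" using mulX aA x by blast
      hence "sc a x \<in> Xg n" by simp
      hence "sc a x = 0" using H0 N nN by blast
      hence "a \<in> P" using Px aA by blast
      thus ?thesis using aP by blast
    qed
  qed
qed

end
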